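(* Let $n\ge3$ and let $G$ be a spanning subgraph of $CT_n$. Then $$\sum_{x\in\mathrm{S}_n}\sum_{i=0}^{n} e(G_x^i)\ \ge\ \sum_{w\in V(G)}\binom{d_G(w)}{2}.$$
   Context: $\mathrm{S}_n$ is the symmetric group on $\{1,\dots,n\}$; $\mathrm{supp}(x)=\{i:i^x\ne i\}$. $CT_n$ has vertex set $\mathrm{S}_n$, with $\{x,y\}$ an edge iff $yx^{-1}$ is a transposition; the support of an edge $\{u,z\}$ is $\mathrm{supp}(\{u,z\})=\mathrm{supp}(zu^{-1})$. Let $\mathscr F_0$ be the set of all transpositions of $\mathrm{S}_n$ and, for $i\in\{1,\dots,n\}$, $\mathscr F_i=\{y\in\mathscr F_0: i\in\mathrm{supp}(y)\}$. Set $\delta_0=0$ and $\delta_i=1$ for $i\ge1$. For a spanning subgraph $G$ of $CT_n$, $i\in\{0,\dots,n\}$ and $x\in\mathrm{S}_n$, the graph $G_x^i$ has vertex set $\{yx: y\in\mathscr F_i\}$, and two vertices $u,z$ of it are adjacent iff $|\mathrm{supp}(\{x,u\})\cap\mathrm{supp}(\{x,z\})|=\delta_i$ and there is a vertex $w\ne x$ such that $(u,w,z)$ is a $2$-path in $G$. $d_G(w)$ is the degree of $w$ in $G$. *)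

theory Defs
  imports "HOL-Combinatorics.Combinatorics"
begin

text \<open>We use the right-action convention i^(xy) = (i^x)^y,
so the product x y is the function composition y o x.\<close>

definition Sn :: "nat \<Rightarrow> (nat \<Rightarrow> nat) set" where
  "Sn n = {p. p permutes {1..n}}"

definition pmul :: "(nat \<Rightarrow> nat) \<Rightarrow> (nat \<Rightarrow> nat) \<Rightarrow> (nat \<Rightarrow> nat)" where
  "pmul a b = b \<circ> a"

definition psupp :: "(nat \<Rightarrow> nat) \<Rightarrow> nat set" where
  "psupp p = {i. p i \<noteq> i}"

definition transps :: "nat \<Rightarrow> (nat \<Rightarrow> nat) set" where
  "transps n = {transpose a b | a b. a \<in> {1..n} \<and> b \<in> {1..n} \<and> a \<noteq> b}"

definition Fam :: "nat \<Rightarrow> nat \<Rightarrow> (nat \<Rightarrow> nat) set" where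
  "Fam n i = (if i = 0 then transps n else {y \<in> transps n. i \<in> psupp y})"

definition delta :: "nat \<Rightarrow> nat" where
  "delta i = (if i = 0 then 0 else 1)"

definition CT_edges :: "nat \<Rightarrow> (nat \<Rightarrow> nat) set set" where
  "CT_edges n = {{x, y} | x y. x \<in> Sn n \<and> y \<in> Sn n \<and> pmul y (inv x) \<in> transps n}"

definition esupp :: "(nat \<Rightarrow> nat) \<Rightarrow> (nat \<Rightarrow> nat) \<Rightarrow> nat set" where
  "esupp u z = psupp (pmul z (inv u))"

text \<open>A spanning subgraph of CT_n: vertex set Sn n, edge set a subset of CT_edges n.\<close>
definition spanning_subgraph :: "nat \<Rightarrow> (nat \<Rightarrow> nat) set set \<Rightarrow> bool" where
  "spanning_subgraph n E \<longleftrightarrow> E \<subseteq> CT_edges n"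

definition deg :: "(nat \<Rightarrow> nat) set set \<Rightarrow> (nat \<Rightarrow> nat) \<Rightarrow> nat" where
  "deg E w = card {e \<in> E. w \<in> e}"

definition two_path :: "(nat \<Rightarrow> nat) set set \<Rightarrow> (nat \<Rightarrow> nat) \<Rightarrow> (nat \<Rightarrow> nat) \<Rightarrow> (nat \<Rightarrow> nat) \<Rightarrow> bool" where
  "two_path E u w z \<longleftrightarrow> u \<noteq> w \<and> w \<noteq> z \<and> u \<noteq> z \<and> {u, w} \<in> E \<and> {w, z} \<in> E"

definition Gx_vertices :: "nat \<Rightarrow> nat \<Rightarrow> (nat \<Rightarrow> nat) \<Rightarrow> (nat \<Rightarrow> nat) set" where
  "Gx_vertices n i x = {pmul y x | y. y \<in> Fam n i}"

definition Gx_edges :: "(nat \<Rightarrow> nat) set set \<Rightarrow> nat \<Rightarrow> nat \<Rightarrow> (nat \<Rightarrow> nat) \<Rightarrow> (nat \<Rightarrow> nat) set set" where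
  "Gx_edges E n i x = {{u, z} | u z. u \<in> Gx_vertices n i x \<and> z \<in> Gx_vertices n i x \<and> u \<noteq> z
      \<and> card (esupp x u \<inter> esupp x z) = delta i
      \<and> (\<exists>w \<in> Sn n. w \<noteq> x \<and> two_path E u w z)}"

end

theory Submission
  imports Defs
begin

definition nbr :: "(nat \<Rightarrow> nat) set set \<Rightarrow> (nat \<Rightarrow> nat) \<Rightarrow> (nat \<Rightarrow> nat) set" where
  "nbr E w = {v. {w, v} \<in> E}"

lemma psupp_transpose: "a \<noteq> b \<Longrightarrow> psupp (transpose a b) = {a, b}"
  by (auto simp: psupp_def transpose_def)

lemma Sn_bij: "w \<in> Sn n \<Longrightarrow> bij w"
  by (simp add: Sn_def permutes_bij)

lemma edge_nb:
  assumes "spanning_subgraph n E" "{w, v} \<in> E"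
  shows "w \<in> Sn n \<and> v \<in> Sn n \<and> (\<exists>a b. a \<in> {1..n} \<and> b \<in> {1..n} \<and> a \<noteq> b \<and> v = w \<circ> transpose a b)"
proof -
  from assms have "{w, v} \<in> CT_edges n" unfolding spanning_subgraph_def by auto
  then obtain x y where xy: "{w, v} = {x, y}" "x \<in> Sn n" "y \<in> Sn n" "inv x \<circ> y \<in> transps n"
    unfolding CT_edges_def pmul_def by auto
  then obtain a b where ab: "a \<in> {1..n}" "b \<in> {1..n}" "a \<noteq> b" "inv x \<circ> y = transpose a b"
    unfolding transps_def by auto
  have bx: "bij x" "bij y" using xy(2,3) Sn_bij by blast+
  have y: "y = x \<circ> transpose a b"
  proof -
    have xi: "x \<circ> inv x = id" using bx(1) bij_is_surj surj_iff by blast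
    have "x \<circ> (inv x \<circ> y) = y" unfolding o_assoc xi by simp
    then show ?thesis using ab by simp
  qed
  have x: "x = y \<circ> transpose a b"
    using y by (simp add: comp_assoc)
  show ?thesis
  proof (cases "w = x")
    case True
    then have "v = y" using xy(1) ab(3) y by (auto simp: doubleton_eq_iff fun_eq_iff)
    then show ?thesis using True xy ab y by blast
  next
    case False
    then have "w = y" "v = x" using xy(1) by (auto simp: doubleton_eq_iff)
    then show ?thesis using xy ab x by blast
  qed
qed

lemma transp_ne_id: "a \<noteq> b \<Longrightarrow> w \<circ> transpose a b \<noteq> w" if "bij w"
proof
  assume "a \<noteq> b" "w \<circ> transpose a b = w"
  then have "w (transpose a b a) = w a" by (metis comp_apply)
  then have "b = a" using that by (simp add: bij_is_inj inj_eq)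
  then show False using \<open>a \<noteq> b\<close> by simp
qed

lemma nbr_ne:
  assumes "spanning_subgraph n E" "v \<in> nbr E w"
  shows "v \<noteq> w"
proof -
  have "{w, v} \<in> E" using assms(2) unfolding nbr_def by simp
  from edge_nb[OF assms(1) this] obtain a b where
    ab: "w \<in> Sn n" "a \<noteq> b" "v = w \<circ> transpose a b" by blast
  have "bij w" using ab(1) by (rule Sn_bij)
  from transp_ne_id[OF this ab(2)] show ?thesis using ab(3) by simp
qed

lemma deg_eq:
  assumes "spanning_subgraph n E"
  shows "deg E w = card (nbr E w)"
proof -
  have "{e \<in> E. w \<in> e} = (\<lambda>v. {w, v}) ` nbr E w"
  proof
    show "{e \<in> E. w \<in> e} \<subseteq> (\<lambda>v. {w, v}) ` nbr E w"
    proof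
      fix e assume e: "e \<in> {e \<in> E. w \<in> e}"
      then have "e \<in> CT_edges n" using assms unfolding spanning_subgraph_def by auto
      then obtain x y where "e = {x, y}" unfolding CT_edges_def by auto
      with e show "e \<in> (\<lambda>v. {w, v}) ` nbr E w"
        unfolding nbr_def by (auto simp: insert_commute)
    qed
  qed (auto simp: nbr_def)
  moreover have "inj_on (\<lambda>v. {w, v}) (nbr E w)"
    using nbr_ne[OF assms] by (auto simp: inj_on_def doubleton_eq_iff)
  ultimately show ?thesis unfolding deg_def by (simp add: card_image)
qed

lemma finite_Sn: "finite (Sn n)"
  unfolding Sn_def by (rule finite_permutations) simp

lemma nbr_sub: "spanning_subgraph n E \<Longrightarrow> nbr E w \<subseteq> Sn n"
  using edge_nb[of n E w] unfolding nbr_def by blast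

lemma finite_transps: "finite (transps n)"
proof -
  have "transps n \<subseteq> (\<lambda>(a,b). transpose a b) ` ({1..n} \<times> {1..n})"
    unfolding transps_def by auto
  then show ?thesis by (rule finite_subset) simp
qed

lemma finite_Gx: "finite (Gx_edges E n i x)"
proof -
  have fv: "finite (Gx_vertices n i x)"
  proof -
    have "Gx_vertices n i x \<subseteq> (\<lambda>y. pmul y x) ` transps n"
      unfolding Gx_vertices_def Fam_def by auto
    then show ?thesis using finite_transps[of n] by (meson finite_imageI finite_subset)
  qed
  have "Gx_edges E n i x \<subseteq> Pow (Gx_vertices n i x)"
    unfolding Gx_edges_def by auto
  then show ?thesis using fv by (meson finite_Pow_iff finite_subset)
qed

lemma Gx_edgesI:
  assumes "u \<in> Gx_vertices n i x" "z \<in> Gx_vertices n i x" "u \<noteq> z"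
    "card (esupp x u \<inter> esupp x z) = delta i" "w \<in> Sn n" "w \<noteq> x" "two_path E u w z"
  shows "{u, z} \<in> Gx_edges E n i x"
  unfolding Gx_edges_def mem_Collect_eq
  by (rule exI[of _ u], rule exI[of _ z]) (use assms in blast)

lemma Gx_vertI: "y \<in> Fam n i \<Longrightarrow> x \<circ> y \<in> Gx_vertices n i x"
  unfolding Gx_vertices_def pmul_def by blast

lemma core:
  assumes sp: "spanning_subgraph n E" and w: "w \<in> Sn n"
    and u: "u \<in> nbr E w" and z: "z \<in> nbr E w" and uz: "u \<noteq> z"
  shows "u \<circ> inv w \<circ> z \<in> Sn n \<and> (\<exists>i\<in>{0..n}. {u, z} \<in> Gx_edges E n i (u \<circ> inv w \<circ> z))"
proof -
  obtain a b where ab: "a \<in> {1..n}" "b \<in> {1..n}" "a \<noteq> b" "u = w \<circ> transpose a b"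
    using edge_nb[OF sp, of w u] u unfolding nbr_def by blast
  obtain c d where cd: "c \<in> {1..n}" "d \<in> {1..n}" "c \<noteq> d" "z = w \<circ> transpose c d"
    using edge_nb[OF sp, of w z] z unfolding nbr_def by blast
  define t1 where "t1 = transpose a b"
  define t2 where "t2 = transpose c d"
  define x where "x = u \<circ> inv w \<circ> z"
  have bw: "bij w" using w Sn_bij by auto
  have iw: "inv w \<circ> w = id" using bw by (simp add: bij_is_inj inv_o_cancel)
  have x: "x = w \<circ> t1 \<circ> t2"
    unfolding x_def ab(4) cd(4) t1_def t2_def
    by (metis (no_types, lifting) comp_assoc comp_id iw)
  have xS: "x \<in> Sn n"
  proof -
    have "t1 permutes {1..n}" "t2 permutes {1..n}"
      unfolding t1_def t2_def using ab cd by (auto intro: permutes_swap_id)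
    then show ?thesis using w unfolding x Sn_def
      by (auto intro: permutes_compose)
  qed
  have bx: "bij x" using xS Sn_bij by auto
  have ix: "inv x \<circ> x = id" using bx by (simp add: bij_is_inj inv_o_cancel)
  have t12: "t1 \<noteq> t2" using uz ab(4) cd(4) t1_def t2_def by auto
  have u2: "u = x \<circ> t2" unfolding x ab(4) t1_def t2_def
    by (simp add: comp_assoc)
  define y2 where "y2 = transpose (t2 a) (t2 b)"
  have t1t2: "t1 \<circ> t2 = t2 \<circ> y2"
    unfolding t1_def y2_def using transpose_comp_eq[of t2 a b] unfolding t2_def by simp
  have z2: "z = x \<circ> y2"
  proof -
    have "x \<circ> y2 = w \<circ> (t1 \<circ> (t2 \<circ> y2))" unfolding x by (simp add: comp_assoc)
    also have "\<dots> = w \<circ> (t1 \<circ> (t1 \<circ> t2))" using t1t2 by simp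
    also have "\<dots> = w \<circ> t2" unfolding t1_def
      by (simp flip: comp_assoc[of "transpose a b" "transpose a b"])
    finally show ?thesis using cd(4) t2_def by simp
  qed
  have ex1: "esupp x u = {c, d}"
    unfolding esupp_def pmul_def u2 using ix cd(3)
    by (simp add: comp_assoc[symmetric] psupp_transpose t2_def)
  have ab2: "t2 a \<noteq> t2 b" using ab(3) unfolding t2_def by (metis transpose_involutory)
  have ex2: "esupp x z = {t2 a, t2 b}"
    unfolding esupp_def pmul_def z2 using ix ab2
    by (simp add: comp_assoc[symmetric] psupp_transpose y2_def)
  have img: "t2 ` {c, d} = {c, d}" unfolding t2_def by auto
  have inter: "esupp x u \<inter> esupp x z = t2 ` ({a, b} \<inter> {c, d})"
  proof -
    have "t2 ` ({a, b} \<inter> {c, d}) = t2 ` {a, b} \<inter> t2 ` {c, d}"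
      by (rule image_Int) (simp add: t2_def)
    then show ?thesis using ex1 ex2 img by auto
  qed
  have cardI: "card (esupp x u \<inter> esupp x z) = card ({a, b} \<inter> {c, d})"
    unfolding inter by (rule card_image) (simp add: t2_def)
  have t2T: "t2 \<in> transps n" unfolding t2_def transps_def using cd by auto
  have t2ab: "t2 a \<in> {1..n} \<and> t2 b \<in> {1..n}"
    using ab cd unfolding t2_def by (auto simp: transpose_def)
  have y2T: "y2 \<in> transps n" unfolding y2_def transps_def using t2ab ab2 by auto
  have wx: "w \<noteq> x"
  proof
    assume "w = x"
    then have "w \<circ> (t1 \<circ> t2) = w \<circ> id" unfolding x by (simp add: comp_assoc)
    then have "t1 \<circ> t2 = id" using bw
      by (metis (no_types, lifting) comp_assoc iw id_comp)
    then have "t1 \<circ> (t1 \<circ> t2) = t1" by simp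
    then have "t2 = t1" unfolding t1_def by (simp flip: comp_assoc)
    then show False using t12 by simp
  qed
  have tp: "two_path E u w z"
    unfolding two_path_def using u z uz nbr_ne[OF sp u] nbr_ne[OF sp z]
    by (auto simp: nbr_def insert_commute)
  have fam: "\<exists>i\<in>{0..n}. {u, z} \<in> Gx_edges E n i x"
  proof (cases "{a, b} \<inter> {c, d} = {}")
    case True
    have "u \<in> Gx_vertices n 0 x" "z \<in> Gx_vertices n 0 x"
      unfolding u2 z2 by (rule Gx_vertI, simp add: Fam_def t2T y2T)+
    moreover have "card (esupp x u \<inter> esupp x z) = delta 0"
      using cardI True by (simp add: delta_def)
    ultimately have "{u, z} \<in> Gx_edges E n 0 x"
      using uz w wx tp by (intro Gx_edgesI) auto
    then show ?thesis by auto
  next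
    case False
    then obtain j where j: "j \<in> {a, b} \<inter> {c, d}" by blast
    have single: "{a, b} \<inter> {c, d} = {j}"
      using j t12 ab(3) cd(3) unfolding t1_def t2_def
      by (auto simp: transpose_commute)
    define i where "i = t2 j"
    have ii: "i \<in> {c, d}" using j img unfolding i_def by blast
    have i1: "i \<in> {1..n}" using ii cd by auto
    have iab: "i \<in> {t2 a, t2 b}" using j unfolding i_def by auto
    have i0: "i \<noteq> 0" using i1 by auto
    have "t2 \<in> Fam n i" unfolding Fam_def using i0 t2T ii psupp_transpose[OF cd(3)]
      by (simp add: t2_def)
    moreover have "y2 \<in> Fam n i" unfolding Fam_def using i0 y2T iab psupp_transpose[OF ab2]
      by (simp add: y2_def)
    ultimately have "u \<in> Gx_vertices n i x" "z \<in> Gx_vertices n i x"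
      unfolding u2 z2 by (simp_all add: Gx_vertI)
    moreover have "card (esupp x u \<inter> esupp x z) = delta i"
      using cardI single i1 by (simp add: delta_def)
    ultimately have "{u, z} \<in> Gx_edges E n i x"
      using uz w wx tp by (intro Gx_edgesI) auto
    moreover have "i \<in> {0..n}" using i1 by simp
    ultimately show ?thesis by blast
  qed
  show ?thesis unfolding x_def[symmetric] using xS fam by (rule conjI)
qed

theorem mainTheorem7:
  fixes n :: nat and E :: "(nat \<Rightarrow> nat) set set"
  assumes "n \<ge> 3" and "spanning_subgraph n E"
  shows "(\<Sum>x\<in>Sn n. \<Sum>i=0..n. card (Gx_edges E n i x)) \<ge> (\<Sum>w\<in>Sn n. deg E w choose 2)"
proof -
  note sp = assms(2)
  define A where "A = (SIGMA w:Sn n. {S. S \<subseteq> nbr E w \<and> card S = 2})"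
  define B where "B = (SIGMA x:Sn n. SIGMA i:{0..n}. Gx_edges E n i x)"
  have fnb: "finite (nbr E w)" for w using nbr_sub[OF sp] finite_Sn by (rule finite_subset)
  have fS: "finite {S. S \<subseteq> nbr E w \<and> card S = 2}" for w
  proof -
    have "{S. S \<subseteq> nbr E w \<and> card S = 2} \<subseteq> Pow (nbr E w)" by blast
    then show ?thesis using fnb[of w] by (meson finite_Pow_iff finite_subset)
  qed
  have "card A = (\<Sum>w\<in>Sn n. card {S. S \<subseteq> nbr E w \<and> card S = 2})"
    unfolding A_def by (rule card_SigmaI) (use finite_Sn fS in blast)+
  also have "\<dots> = (\<Sum>w\<in>Sn n. deg E w choose 2)"
  proof (rule sum.cong[OF refl])
    fix w show "card {S. S \<subseteq> nbr E w \<and> card S = 2} = deg E w choose 2"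
      unfolding deg_eq[OF sp] by (rule n_subsets[OF fnb])
  qed
  finally have RHS: "(\<Sum>w\<in>Sn n. deg E w choose 2) = card A" by (rule sym)
  have fin2: "finite (SIGMA i:{0..n}. Gx_edges E n i x)" for x
    by (intro finite_SigmaI finite_atLeastAtMost finite_Gx)
  have finB: "finite B" unfolding B_def
    by (intro finite_SigmaI finite_Sn fin2)
  have "card B = (\<Sum>x\<in>Sn n. card (SIGMA i:{0..n}. Gx_edges E n i x))"
    unfolding B_def by (rule card_SigmaI) (use finite_Sn fin2 in blast)+
  also have "\<dots> = (\<Sum>x\<in>Sn n. \<Sum>i=0..n. card (Gx_edges E n i x))"
  proof (rule sum.cong[OF refl])
    fix x show "card (SIGMA i:{0..n}. Gx_edges E n i x) = (\<Sum>i=0..n. card (Gx_edges E n i x))"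
      by (rule card_SigmaI) (use finite_Gx in blast)+
  qed
  finally have LHS: "(\<Sum>x\<in>Sn n. \<Sum>i=0..n. card (Gx_edges E n i x)) = card B" by (rule sym)
  define U where "U = (\<lambda>S::(nat\<Rightarrow>nat) set. SOME v. v \<in> S)"
  define Z where "Z = (\<lambda>S::(nat\<Rightarrow>nat) set. SOME v. v \<in> S \<and> v \<noteq> U S)"
  define X where "X = (\<lambda>w S. U S \<circ> inv w \<circ> Z S)"
  define f where "f = (\<lambda>(w, S). (X w S, SOME i. i \<in> {0..n} \<and> S \<in> Gx_edges E n i (X w S), S))"
  have UZ: "S = {U S, Z S} \<and> U S \<noteq> Z S" if c2: "card S = 2" for S :: "(nat\<Rightarrow>nat) set"
  proof -
    obtain p q where pq: "S = {p, q}" "p \<noteq> q" using c2 unfolding card_2_iff by blast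
    have "\<exists>v. v \<in> S" using pq(1) by (intro exI[of _ p]) simp
    then have hU: "U S \<in> S" unfolding U_def by (rule someI_ex)
    have "\<exists>v. v \<in> S \<and> v \<noteq> U S"
    proof (cases "U S = p")
      case True then show ?thesis using pq by (intro exI[of _ q]) simp
    next
      case False then show ?thesis using pq by (intro exI[of _ p]) simp
    qed
    then have hZ: "Z S \<in> S \<and> Z S \<noteq> U S" unfolding Z_def by (rule someI_ex)
    have fS: "finite S" using c2 by (metis card.infinite zero_neq_numeral)
    have sub: "{U S, Z S} \<subseteq> S" using hU hZ by blast
    have uzne: "U S \<noteq> Z S" using hZ by (metis)
    then have "card {U S, Z S} = card S" using c2 by simp
    then have "{U S, Z S} = S" using card_subset_eq[OF fS sub] by blast
    then show ?thesis using uzne by (rule conjI[OF sym])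
  qed
  have img: "f ` A \<subseteq> B"
  proof
    fix p assume "p \<in> f ` A"
    then obtain w S where wS: "(w, S) \<in> A" "p = f (w, S)" by auto
    then have w: "w \<in> Sn n" and S: "S \<subseteq> nbr E w" "card S = 2" unfolding A_def by auto
    have uz: "S = {U S, Z S}" "U S \<noteq> Z S" using UZ S(2) by auto
    have "X w S \<in> Sn n \<and> (\<exists>i\<in>{0..n}. {U S, Z S} \<in> Gx_edges E n i (X w S))"
      unfolding X_def by (rule core[OF sp w]) (use S uz in auto)
    then have c: "X w S \<in> Sn n" "\<exists>i. i \<in> {0..n} \<and> S \<in> Gx_edges E n i (X w S)"
      using uz by auto
    have "(SOME i. i \<in> {0..n} \<and> S \<in> Gx_edges E n i (X w S)) \<in> {0..n} \<and>
          S \<in> Gx_edges E n (SOME i. i \<in> {0..n} \<and> S \<in> Gx_edges E n i (X w S)) (X w S)"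
      using c(2) by (rule someI_ex)
    then show "p \<in> B" unfolding B_def wS(2) f_def using c(1) by auto
  qed
  have inj: "inj_on f A"
  proof
    fix p q assume p: "p \<in> A" and q: "q \<in> A" and fe: "f p = f q"
    obtain w S where pw: "p = (w, S)" by (cases p)
    obtain w' S' where qw: "q = (w', S')" by (cases q)
    have SS: "S' = S" and XX: "X w S = X w' S" using fe unfolding pw qw f_def by auto
    have bw: "bij w" "bij w'" using p q unfolding pw qw A_def using Sn_bij by auto
    have bu: "bij (U S)" "bij (Z S)"
    proof -
      have S: "S \<subseteq> nbr E w" "card S = 2" using p unfolding pw A_def by auto
      then have "U S \<in> Sn n" "Z S \<in> Sn n" using UZ[OF S(2)] nbr_sub[OF sp] by blast+
      then show "bij (U S)" "bij (Z S)" using Sn_bij by auto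
    qed
    have "inv (U S) \<circ> X w S \<circ> inv (Z S) = inv w" for w
    proof -
      have "inv (U S) \<circ> X w S \<circ> inv (Z S) = (inv (U S) \<circ> U S) \<circ> inv w \<circ> (Z S \<circ> inv (Z S))"
        unfolding X_def by (simp add: comp_assoc)
      moreover have "inv (U S) \<circ> U S = id" using bu(1) by (simp add: bij_is_inj)
      moreover have "Z S \<circ> inv (Z S) = id" using bu(2) bij_is_surj surj_iff by blast
      ultimately show ?thesis by simp
    qed
    then have "inv w = inv w'" using XX by metis
    then have "w = w'" using bw by (metis inv_inv_eq)
    then show "p = q" using pw qw SS by simp
  qed
  have "card A \<le> card B" using card_inj_on_le[OF inj img finB] .
  then show ?thesis using LHS RHS by simp
qed

end
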